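(* Let $n\ge2$. Under the diagonal top-down model, the probability that the generated fully heterochronous ranked tree shape with $n$ leaves has $\mathbf{F}$-matrix $F$ is $$P(F)=\frac{1}{C_{n-1}}\cdot\frac{2^{n-1}}{\prod_{j=1}^{2n-2}F_{j-1,j-1}},\qquad C_{n-1}=\frac1n\binom{2n-2}{n-1}.$$
   Context: A fully heterochronous ranked tree shape with $n$ leaves is a rooted full binary tree (every node has out-degree $0$ or $2$), without leaf labels, with $n$ leaves, together with a total ordering of all $2n-1$ nodes (leaves included) such that nodes appear in increasing order along every path from the root to a leaf; the position of a node in this order, numbered $0,\dots,2n-2$, is its rank. Its $\mathbf{F}$-matrix is the $(2n-2)\times(2n-2)$ lower triangular matrix $F$, indices from $0$ to $2n-3$, where for $0\le j\le i$ the entry $F_{i,j}$ is the number of edges from a parent node $v$ to a child node $w$ with rank of $v$ at most $j$ and rank of $w$ larger than $i$ (entries with a negative index are taken to be $0$). The diagonal of such a matrix is a sequence of positive integers with $F_{0,0}=2$, $F_{k,k}=F_{k-1,k-1}\pm1$ and $F_{2n-3,2n-3}=1$; there are $C_{n-1}$ such sequences. Diagonal top-down model: first choose the diagonal $(F_{k,k})_{k=0}^{2n-3}$ uniformly at random among all such valid diagonals. Then build the remaining entries row by row: for $k=1,\dots,2n-3$, given rows $0,\dots,k-1$, choose $L\in\{0,\dots,k-1\}$ with probability $(F_{k-1,L}-F_{k-1,L-1})/F_{k-1,k-1}$ and set $F_{k,j}=F_{k-1,j}$ for $j<L$ and $F_{k,j}=F_{k-1,j}-1$ for $L\le j\le k-1$.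 Equivalently, the node of rank $k$ is attached as the child end of an edge chosen uniformly at random among the $F_{k-1,k-1}$ edges whose parent has rank at most $k-1$ and whose child has not yet been placed; it is internal if $F_{k,k}=F_{k-1,k-1}+1$ and a leaf otherwise (the node of rank $2n-2$ is a leaf on the unique remaining edge). *)

theory Defs
  imports "HOL-Probability.Probability"
begin

text \<open>A fully heterochronous ranked tree shape with n leaves: nodes are identified with
their ranks 0..2n-2; the tree is given by the parent function p on ranks 1..2n-2,
with the parent having smaller rank, and every node has 0 or 2 children.\<close>
definition fh_ranked_tree :: "nat \<Rightarrow> (nat \<Rightarrow> nat) \<Rightarrow> bool" where
  "fh_ranked_tree n p \<longleftrightarrow>
     (\<forall>k\<in>{1..2*n-2}. p k < k) \<and>
     (\<forall>v\<in>{0..2*n-2}. card {k\<in>{1..2*n-2}. p k = v} \<in> {0, 2})"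

definition Fmat :: "nat \<Rightarrow> (nat \<Rightarrow> nat) \<Rightarrow> nat \<Rightarrow> nat \<Rightarrow> nat" where
  "Fmat n p i j = (if i \<le> 2*n-3 \<and> j \<le> i
      then card {k\<in>{1..2*n-2}. p k \<le> j \<and> i < k} else 0)"

text \<open>Valid diagonals (F_{k,k}) for k = 0..2n-3, as lists.\<close>
definition valid_diags :: "nat \<Rightarrow> nat list set" where
  "valid_diags n = {d. length d = 2*n-2 \<and> d!0 = 2 \<and> d!(2*n-3) = 1 \<and>
      (\<forall>k<2*n-2. 0 < d!k) \<and>
      (\<forall>k. 1 \<le> k \<and> k < 2*n-2 \<longrightarrow> d!k = d!(k-1) + 1 \<or> d!(k-1) = d!k + 1)}"

definition incr :: "(nat \<Rightarrow> nat \<Rightarrow> nat) \<Rightarrow> nat \<Rightarrow> nat \<Rightarrow> nat" where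
  "incr M k L = (if L = 0 then M (k-1) 0 else M (k-1) L - M (k-1) (L-1))"

definition choose_L :: "(nat \<Rightarrow> nat \<Rightarrow> nat) \<Rightarrow> nat \<Rightarrow> nat pmf" where
  "choose_L M k = embed_pmf (\<lambda>L. if L < k then real (incr M k L) / real (M (k-1) (k-1)) else 0)"

definition new_row :: "(nat \<Rightarrow> nat \<Rightarrow> nat) \<Rightarrow> nat \<Rightarrow> nat \<Rightarrow> nat \<Rightarrow> (nat \<Rightarrow> nat \<Rightarrow> nat)" where
  "new_row M k L dk = (\<lambda>i j. if i = k then
       (if j < L then M (k-1) j else if j \<le> k - 1 then M (k-1) j - 1 else if j = k then dk else 0)
     else M i j)"

fun build :: "nat list \<Rightarrow> nat \<Rightarrow> (nat \<Rightarrow> nat \<Rightarrow> nat) pmf" where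
  "build d 0 = return_pmf (\<lambda>i j. if i = 0 \<and> j = 0 then d!0 else 0)"
| "build d (Suc k) = do {
      M \<leftarrow> build d k;
      L \<leftarrow> choose_L M (Suc k);
      return_pmf (new_row M (Suc k) L (d!(Suc k)))
    }"

definition diag_topdown :: "nat \<Rightarrow> (nat \<Rightarrow> nat \<Rightarrow> nat) pmf" where
  "diag_topdown n = do { d \<leftarrow> pmf_of_set (valid_diags n); build d (2*n-3) }"

definition catalan :: "nat \<Rightarrow> real" where
  "catalan m = real ((2*m) choose m) / real (m + 1)"

end

theory Submission
  imports Defs
begin


fun TT :: "nat \<Rightarrow> nat \<Rightarrow> nat list set" where
  "TT 0 h = (if h = 1 then {[1]} else {})"
| "TT (Suc L) h = (if h = 0 then {} else (Cons h) ` (TT L (h+1) \<union> TT L (h-1)))"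

definition PP :: "nat \<Rightarrow> nat \<Rightarrow> nat list \<Rightarrow> bool" where
  "PP L h xs \<longleftrightarrow> length xs = Suc L \<and> xs!0 = h \<and> xs!L = 1 \<and> (\<forall>k\<le>L. 0 < xs!k) \<and>
     (\<forall>k<L. xs!(Suc k) = xs!k + 1 \<or> xs!k = xs!(Suc k) + 1)"

lemma PP_Suc: "PP (Suc L) h xs \<longleftrightarrow> h \<noteq> 0 \<and> (\<exists>ys. xs = h # ys \<and> (PP L (h+1) ys \<or> PP L (h-1) ys))"
proof
  assume A: "PP (Suc L) h xs"
  then obtain ys where xs: "xs = h # ys" and ly: "length ys = Suc L"
    unfolding PP_def by (cases xs) auto
  have pos: "\<forall>k\<le>Suc L. 0 < xs!k" and st: "\<forall>k<Suc L. xs!(Suc k) = xs!k + 1 \<or> xs!k = xs!(Suc k) + 1"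
    using A unfolding PP_def by auto
  have h0: "h \<noteq> 0" using pos xs by (metis le0 less_numeral_extra(3) nth_Cons_0)
  have pos': "\<forall>k\<le>L. 0 < ys!k" using pos xs by (metis Suc_le_mono nth_Cons_Suc)
  have st': "\<forall>k<L. ys!(Suc k) = ys!k + 1 \<or> ys!k = ys!(Suc k) + 1" using st xs
    by (metis Suc_mono nth_Cons_Suc)
  have s0: "ys!0 = h+1 \<or> h = ys!0 + 1" using st xs by auto
  have last: "ys!L = 1" using A xs unfolding PP_def by auto
  show "h \<noteq> 0 \<and> (\<exists>ys. xs = h # ys \<and> (PP L (h+1) ys \<or> PP L (h-1) ys))"
    using h0 xs s0 pos' st' last ly unfolding PP_def by auto
next
  assume B: "h \<noteq> 0 \<and> (\<exists>ys. xs = h # ys \<and> (PP L (h+1) ys \<or> PP L (h-1) ys))"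
  then obtain ys where h0: "h \<noteq> 0" and xs: "xs = h # ys" and P: "PP L (h+1) ys \<or> PP L (h-1) ys" by blast
  have ly: "length ys = Suc L" and last: "ys!L = 1" and pos': "\<forall>k\<le>L. 0 < ys!k"
    and st': "\<forall>k<L. ys!(Suc k) = ys!k + 1 \<or> ys!k = ys!(Suc k) + 1"
    using P unfolding PP_def by auto
  have s0: "ys!0 = h+1 \<or> h = ys!0 + 1" using P h0 unfolding PP_def by auto
  have pos: "\<forall>k\<le>Suc L. 0 < xs!k"
  proof (intro allI impI)
    fix k assume "k \<le> Suc L" then show "0 < xs!k" using pos' h0 xs by (cases k) auto
  qed
  have st: "\<forall>k<Suc L. xs!(Suc k) = xs!k + 1 \<or> xs!k = xs!(Suc k) + 1"
  proof (intro allI impI)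
    fix k assume "k < Suc L" then show "xs!(Suc k) = xs!k + 1 \<or> xs!k = xs!(Suc k) + 1"
      using st' s0 xs by (cases k) auto
  qed
  show "PP (Suc L) h xs" unfolding PP_def using xs ly last pos st by auto
qed

lemma TT_char: "xs \<in> TT L h \<longleftrightarrow> PP L h xs"
proof (induction L arbitrary: h xs)
  case 0
  show ?case
  proof
    assume "xs \<in> TT 0 h" then show "PP 0 h xs" by (auto simp: PP_def split: if_splits)
  next
    assume "PP 0 h xs" then have "length xs = 1" "xs!0 = h" "xs!0 = 1" by (auto simp: PP_def)
    then show "xs \<in> TT 0 h" by (cases xs) auto
  qed
next
  case (Suc L)
  show ?case unfolding PP_Suc using Suc.IH by auto
qed

lemma TT_finite: "finite (TT L h)"
  by (induction L arbitrary: h) auto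

lemma TT_0: "TT L 0 = {}"
  by (cases L) auto

lemma TT_hd: "xs \<in> TT L h \<Longrightarrow> xs!0 = h"
  by (simp add: TT_char PP_def)

lemma TT_big: "h > Suc L \<Longrightarrow> TT L h = {}"
  by (induction L arbitrary: h) auto

lemma card_TT_Suc: "h \<noteq> 0 \<Longrightarrow> card (TT (Suc L) h) = card (TT L (h+1)) + card (TT L (h-1))"
proof -
  assume h: "h \<noteq> 0"
  have "card (TT (Suc L) h) = card (TT L (h+1) \<union> TT L (h-1))"
    using h by (simp add: card_image)
  also have "\<dots> = card (TT L (h+1)) + card (TT L (h-1))"
  proof (rule card_Un_disjoint)
    show "TT L (h + 1) \<inter> TT L (h - 1) = {}"
    proof (rule equals0I)
      fix x assume "x \<in> TT L (h + 1) \<inter> TT L (h - 1)"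
      then have "x!0 = h+1" "x!0 = h-1" using TT_hd by auto
      then show False by simp
    qed
  qed (auto simp: TT_finite)
  finally show ?thesis .
qed

definition GG :: "nat \<Rightarrow> nat \<Rightarrow> int" where
  "GG a b = int ((a+b) choose b) - (if b = 0 then 0 else int ((a+b) choose (b-1)))"

lemma GG_pascal: "a \<noteq> 0 \<Longrightarrow> b \<noteq> 0 \<Longrightarrow> GG a b = GG (a-1) b + GG a (b-1)"
proof -
  assume "a \<noteq> 0" "b \<noteq> 0"
  then obtain a' b' where a: "a = Suc a'" and b: "b = Suc b'" by (metis not0_implies_Suc)
  define s where "s = a' + b'"
  have e: "a + b = Suc (Suc s)" "a' + b = Suc s" "a + b' = Suc s" using a b s_def by auto
  show ?thesis
  proof (cases b')
    case 0 then show ?thesis by (simp add: GG_def a b)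
  next
    case (Suc c)
    have 1: "(Suc (Suc s)) choose b = (Suc s choose b') + (Suc s choose b)" using b by simp
    have 2: "(Suc (Suc s)) choose b' = (Suc s choose c) + (Suc s choose b')" using Suc by simp
    have f: "a - 1 = a'" "b - 1 = b'" "b' - 1 = c" "b \<noteq> 0" "b' \<noteq> 0" "a - 1 + b = Suc s" "a + (b - 1) = Suc s"
      using a b Suc e by auto
    show ?thesis unfolding GG_def f e 1 2 
      by (simp only: f if_False)
  qed
qed

lemma GG_zero: "m \<noteq> 0 \<Longrightarrow> GG (m-1) m = 0"
proof -
  assume m: "m \<noteq> 0"
  have "(m - 1 + m) choose m = (m - 1 + m) choose (m-1)"
    using binomial_symmetric[of "m-1" "m-1+m"] m by simp
  then show ?thesis using m by (simp add: GG_def)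
qed

lemma card_TT: "a + b = L \<Longrightarrow> b \<le> a \<Longrightarrow> int (card (TT L (a - b + 1))) = GG a b"
proof (induction L arbitrary: a b)
  case 0 then show ?case by (simp add: GG_def)
next
  case (Suc L)
  let ?h = "a - b + 1"
  have c: "card (TT (Suc L) ?h) = card (TT L (?h+1)) + card (TT L (?h-1))"
    by (rule card_TT_Suc) simp
  show ?case
  proof (cases b)
    case 0
    have "TT L (?h+1) = {}" using Suc.prems 0 by (intro TT_big) simp
    moreover have "int (card (TT L (?h-1))) = GG (a-1) 0"
      using Suc.IH[of "a-1" 0] Suc.prems 0 by simp
    ultimately show ?thesis using c 0 by (simp add: GG_def)
  next
    case (Suc b')
    have hh: "?h + 1 = a - b' + 1" using Suc.prems Suc by simp
    have i1: "int (card (TT L (?h+1))) = GG a b'"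
      unfolding hh using Suc.IH[of a b'] Suc.prems Suc by simp
    show ?thesis
    proof (cases "a = b")
      case True
      then have "TT L (?h-1) = {}" by (simp add: TT_0)
      moreover have "GG a b = GG (a-1) b + GG a b'" using GG_pascal[of a b] Suc True by simp
      moreover have "GG (a-1) b = 0" using GG_zero[of a] True Suc by simp
      ultimately show ?thesis using c i1 by simp
    next
      case False
      have hh2: "?h - 1 = (a-1) - b + 1" using False Suc.prems by simp
      have i2: "int (card (TT L (?h-1))) = GG (a-1) b"
        unfolding hh2 using Suc.IH[of "a-1" b] Suc.prems Suc False by simp
      have "GG a b = GG (a-1) b + GG a b'" using GG_pascal[of a b] Suc Suc.prems by simp
      then show ?thesis using c i1 i2 by simp
    qed
  qed
qed

lemma GG_diag_aux: "real ((2*k+2) choose (k+1)) - real ((2*k+2) choose k) = real ((2*k+2) choose (k+1)) / (real k + 2)"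
proof -
  have a: "real ((2*k+2) choose k) = fact (2*k+2) / (fact k * fact (k+2))"
    by (subst binomial_fact) (auto simp: numeral_2_eq_2)
  have b: "real ((2*k+2) choose (k+1)) = fact (2*k+2) / (fact (k+1) * fact (k+1))"
    by (subst binomial_fact) (auto simp: numeral_2_eq_2)
  have e: "k+2 = Suc (k+1)" by simp
  have f1: "fact (k+2) = (real k + 2) * fact (k+1)"
    unfolding e fact_Suc[of "k+1"] by simp
  have f2: "fact (k+1) = (real k + 1) * fact k" by simp
  have pos: "fact k > (0::real)" by auto
  obtain X where X: "X = (fact (2*k+2) :: real)" by blast
  obtain Y where Y: "Y = (fact k :: real)" "Y > 0" using pos by blast
  have r: "real k \<ge> 0" by simp
  have a': "real ((2*k+2) choose k) = X / (Y * ((real k + 2) * ((real k + 1) * Y)))"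
    using a unfolding f1 f2 X[symmetric] Y(1)[symmetric] .
  have b': "real ((2*k+2) choose (k+1)) = X / (((real k + 1) * Y) * ((real k + 1) * Y))"
    using b unfolding f2 X[symmetric] Y(1)[symmetric] .
  have "Y \<noteq> 0" "real k + 1 \<noteq> 0" "real k + 2 \<noteq> 0" using Y r by auto
  then show ?thesis unfolding a' b' by (simp add: divide_simps) (simp add: algebra_simps)
qed

lemma GG_diag: "real_of_int (GG m m) = real ((2*m) choose m) / real (m+1)"
proof (cases m)
  case 0 then show ?thesis by (simp add: GG_def)
next
  case (Suc k)
  have e: "m + m = 2*k+2" "m = k+1" "m - 1 = k" using Suc by auto
  have "GG m m = int ((2*k+2) choose (k+1)) - int ((2*k+2) choose k)"
    unfolding GG_def e by (simp add: mult_2 del: binomial_Suc_Suc)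
  then have "real_of_int (GG m m) = real ((2*k+2) choose (k+1)) - real ((2*k+2) choose k)"
    by simp
  also have "\<dots> = real ((2*k+2) choose (k+1)) / (real k + 2)"
    by (rule GG_diag_aux)
  finally show ?thesis using Suc by (simp add: numeral_2_eq_2)
qed



lemma pmf_bind_single:
  assumes "\<And>x. x \<in> set_pmf A \<Longrightarrow> x \<noteq> x0 \<Longrightarrow> pmf (f x) y = 0"
  shows "pmf (bind_pmf A f) y = pmf A x0 * pmf (f x0) y"
proof -
  have "pmf (bind_pmf A f) y = (\<integral>x. pmf (f x) y \<partial>measure_pmf A)" by (rule pmf_bind)
  also have "\<dots> = (\<integral>x. pmf (f x0) y * indicator {x0} x \<partial>measure_pmf A)"
    by (rule integral_cong_AE) (auto simp: AE_measure_pmf_iff assms split: split_indicator)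
  also have "\<dots> = pmf (f x0) y * measure_pmf.prob A {x0}" by simp
  also have "\<dots> = pmf A x0 * pmf (f x0) y" by (simp add: measure_pmf_single)
  finally show ?thesis .
qed

definition TF :: "nat \<Rightarrow> (nat \<Rightarrow> nat) \<Rightarrow> nat \<Rightarrow> nat \<Rightarrow> nat \<Rightarrow> nat" where
  "TF n p k = (\<lambda>i j. if i \<le> k then Fmat n p i j else 0)"

definition cnt :: "nat \<Rightarrow> (nat \<Rightarrow> nat) \<Rightarrow> nat \<Rightarrow> nat \<Rightarrow> nat" where
  "cnt n p i j = card {m\<in>{1..2*n-2}. p m = j \<and> i < m}"

lemma build_support: "M \<in> set_pmf (build d k) \<Longrightarrow> k < i \<Longrightarrow> M i j = 0"
proof (induction k arbitrary: M i)
  case 0 then show ?case by auto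
next
  case (Suc k)
  then obtain M' L where M': "M' \<in> set_pmf (build d k)" and M: "M = new_row M' (Suc k) L (d!Suc k)"
    by auto
  then show ?case using Suc.IH[OF M', of i] Suc.prems by (simp add: new_row_def)
qed

lemma valid_TT:
  assumes "n \<ge> 2" shows "valid_diags n = TT (2*n-3) 2"
proof -
  define K where "K = 2*n-3"
  have KN: "2*n-2 = Suc K" using assms unfolding K_def by simp
  have "xs \<in> valid_diags n \<longleftrightarrow> PP K 2 xs" for xs
  proof -
    have a: "(\<forall>k<2*n-2. 0 < xs!k) \<longleftrightarrow> (\<forall>k\<le>K. 0 < xs!k)" unfolding KN by auto
    have b: "(\<forall>k. 1 \<le> k \<and> k < 2*n-2 \<longrightarrow> xs!k = xs!(k-1) + 1 \<or> xs!(k-1) = xs!k + 1) \<longleftrightarrow>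
        (\<forall>k<K. xs!(Suc k) = xs!k + 1 \<or> xs!k = xs!(Suc k) + 1)"
    proof
      assume h: "\<forall>k. 1 \<le> k \<and> k < 2*n-2 \<longrightarrow> xs!k = xs!(k-1) + 1 \<or> xs!(k-1) = xs!k + 1"
      show "\<forall>k<K. xs!(Suc k) = xs!k + 1 \<or> xs!k = xs!(Suc k) + 1"
      proof (intro allI impI)
        fix k assume "k < K" then show "xs!(Suc k) = xs!k + 1 \<or> xs!k = xs!(Suc k) + 1"
          using h[rule_format, of "Suc k"] KN by simp
      qed
    next
      assume h: "\<forall>k<K. xs!(Suc k) = xs!k + 1 \<or> xs!k = xs!(Suc k) + 1"
      show "\<forall>k. 1 \<le> k \<and> k < 2*n-2 \<longrightarrow> xs!k = xs!(k-1) + 1 \<or> xs!(k-1) = xs!k + 1"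
      proof (intro allI impI)
        fix k assume k: "1 \<le> k \<and> k < 2*n-2"
        then obtain k' where "k = Suc k'" by (cases k) auto
        then show "xs!k = xs!(k-1) + 1 \<or> xs!(k-1) = xs!k + 1" using h k KN by auto
      qed
    qed
    show ?thesis unfolding valid_diags_def PP_def mem_Collect_eq a b
      unfolding KN K_def by simp
  qed
  then show ?thesis using TT_char unfolding K_def by blast
qed

lemma card_valid:
  assumes "n \<ge> 2" shows "real (card (valid_diags n)) = catalan (n-1)"
proof -
  define m where "m = n - 1"
  have m1: "m \<ge> 1" using assms unfolding m_def by simp
  have e: "2*n-3 = m + (m-1)" "(2::nat) = m - (m-1) + 1" using assms unfolding m_def by auto
  have "int (card (TT (2*n-3) 2)) = GG m (m-1)"
    unfolding e(1) apply (subst e(2)) by (rule card_TT) auto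
  also have "\<dots> = GG m m" using GG_pascal[of m m] GG_zero[of m] m1 by simp
  finally have "real (card (TT (2*n-3) 2)) = real_of_int (GG m m)"
    by (metis of_int_of_nat_eq)
  also have "\<dots> = catalan (n-1)" unfolding GG_diag catalan_def m_def by simp
  finally show ?thesis using valid_TT[OF assms] by simp
qed

context
  fixes n :: nat and p :: "nat \<Rightarrow> nat"
  assumes n2: "n \<ge> 2" and tree: "fh_ranked_tree n p"
begin

lemma KN: "2*n-2 = Suc (2*n-3)" using n2 by simp

lemma par_lt: "k \<in> {1..2*n-2} \<Longrightarrow> p k < k"
  using tree unfolding fh_ranked_tree_def by auto

lemma children: "v \<le> 2*n-2 \<Longrightarrow> card {k\<in>{1..2*n-2}. p k = v} \<in> {0,2}"
  using tree unfolding fh_ranked_tree_def by auto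

lemma F_eq: "i \<le> 2*n-3 \<Longrightarrow> j \<le> i \<Longrightarrow> Fmat n p i j = card {m\<in>{1..2*n-2}. p m \<le> j \<and> i < m}"
  by (simp add: Fmat_def)

lemma F_zero: assumes "\<not> (i \<le> 2*n-3 \<and> j \<le> i)" shows "Fmat n p i j = 0"
  unfolding Fmat_def using assms by (rule if_not_P)

lemma col_step:
  assumes "i \<le> 2*n-3" "j \<le> i"
  shows "Fmat n p i j = (if j = 0 then 0 else Fmat n p i (j-1)) + cnt n p i j"
proof (cases "j = 0")
  case True
  have "{m\<in>{1..2*n-2}. p m \<le> j \<and> i < m} = {m\<in>{1..2*n-2}. p m = j \<and> i < m}"
    using True by auto
  then show ?thesis using assms True by (simp add: F_eq cnt_def)
next
  case False
  define A where "A = {m\<in>{1..2*n-2}. p m \<le> j \<and> i < m}"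
  define B where "B = {m\<in>{1..2*n-2}. p m \<le> j-1 \<and> i < m}"
  define C where "C = {m\<in>{1..2*n-2}. p m = j \<and> i < m}"
  have "A = B \<union> C"
    using False unfolding A_def B_def C_def by auto
  moreover have "card (B \<union> C) = card B + card C"
    by (rule card_Un_disjoint) (use False in \<open>auto simp: B_def C_def\<close>)
  moreover have "Fmat n p i j = card A" using assms unfolding A_def by (rule F_eq)
  moreover have "Fmat n p i (j-1) = card B" using assms unfolding B_def by (intro F_eq) auto
  moreover have "cnt n p i j = card C" unfolding C_def cnt_def ..
  ultimately show ?thesis using False by simp
qed

lemma row_step:
  assumes "Suc k \<le> 2*n-3" "j \<le> k"
  shows "Fmat n p k j = Fmat n p (Suc k) j + (if p (Suc k) \<le> j then 1 else 0)"
proof -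
  define A where "A = {m\<in>{1..2*n-2}. p m \<le> j \<and> k < m}"
  define B where "B = {m\<in>{1..2*n-2}. p m \<le> j \<and> Suc k < m}"
  define C where "C = {Suc k} \<inter> {m. p m \<le> j}"
  have "A = B \<union> C"
    using assms unfolding A_def B_def C_def by auto
  moreover have "card (B \<union> C) = card B + card C"
    by (rule card_Un_disjoint) (auto simp: B_def C_def)
  moreover have "Fmat n p k j = card A" using assms unfolding A_def by (intro F_eq) auto
  moreover have "Fmat n p (Suc k) j = card B" using assms unfolding B_def by (intro F_eq) auto
  moreover have "card C = (if p (Suc k) \<le> j then 1 else 0)" unfolding C_def by auto
  ultimately show ?thesis by simp
qed

lemma F_pos: assumes "k \<le> 2*n-3" shows "Fmat n p k k > 0"
proof -
  have *: "\<forall>m. m \<in> {1..2*n-2} \<longrightarrow> k < m \<longrightarrow> (\<exists>e\<in>{1..2*n-2}. p e \<le> k \<and> k < e)" for k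
  proof
    fix m show "m \<in> {1..2*n-2} \<longrightarrow> k < m \<longrightarrow> (\<exists>e\<in>{1..2*n-2}. p e \<le> k \<and> k < e)"
    proof (induction m rule: less_induct)
      case (less m)
      show ?case
      proof (intro impI)
        assume m: "m \<in> {1..2*n-2}" "k < m"
        show "\<exists>e\<in>{1..2*n-2}. p e \<le> k \<and> k < e"
        proof (cases "p m \<le> k")
          case True then show ?thesis using m by blast
        next
          case False
          have "p m < m" using par_lt m by blast
          moreover have "p m \<in> {1..2*n-2}" using False m \<open>p m < m\<close> by auto
          ultimately show ?thesis using less.IH[of "p m"] False by auto
        qed
      qed
    qed
  qed
  have mm: "2*n-2 \<in> {1..2*n-2}" "k < 2*n-2" using assms n2 by auto
  obtain e where "e \<in> {1..2*n-2}" "p e \<le> k" "k < e"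
    using *[of k, rule_format, OF mm] by blast
  then have "e \<in> {m\<in>{1..2*n-2}. p m \<le> k \<and> k < m}" by auto
  then have "card {m\<in>{1..2*n-2}. p m \<le> k \<and> k < m} > 0" by (auto simp: card_gt_0_iff)
  then show ?thesis using assms by (simp add: F_eq)
qed

lemma F00: "Fmat n p 0 0 = 2"
proof -
  have "{m\<in>{1..2*n-2}. p m \<le> 0 \<and> 0 < m} = {m\<in>{1..2*n-2}. p m = 0}" by auto
  then have "Fmat n p 0 0 = card {m\<in>{1..2*n-2}. p m = 0}" using F_eq[of 0 0] by simp
  moreover have "card {m\<in>{1..2*n-2}. p m = 0} \<noteq> 0"
  proof -
    have "p 1 < 1" using par_lt[of 1] n2 by auto
    then have "1 \<in> {m\<in>{1..2*n-2}. p m = 0}" using n2 by auto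
    then show ?thesis by (auto simp: card_eq_0_iff)
  qed
  ultimately show ?thesis using children[of 0] by auto
qed

lemma FKK: "Fmat n p (2*n-3) (2*n-3) = 1"
proof -
  have "p (2*n-2) < 2*n-2" using par_lt[of "2*n-2"] n2 by simp
  then have "{m\<in>{1..2*n-2}. p m \<le> 2*n-3 \<and> 2*n-3 < m} = {2*n-2}"
    using n2 by auto
  then show ?thesis by (simp add: F_eq)
qed

lemma diag_step:
  assumes "1 \<le> k" "k \<le> 2*n-3"
  shows "Fmat n p k k = Fmat n p (k-1) (k-1) + 1 \<or> Fmat n p (k-1) (k-1) = Fmat n p k k + 1"
proof -
  have a: "Fmat n p k k = Fmat n p k (k-1) + cnt n p k k" using col_step[of k k] assms by simp
  have "k \<in> {1..2*n-2}" using assms by auto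
  then have "p k < k" by (rule par_lt)
  then have pk: "p k \<le> k - 1" by simp
  have b: "Fmat n p (k-1) (k-1) = Fmat n p k (k-1) + 1" using row_step[of "k-1" "k-1"] assms pk by simp
  have "{m\<in>{1..2*n-2}. p m = k \<and> k < m} = {m\<in>{1..2*n-2}. p m = k}" using par_lt by auto
  then have "cnt n p k k \<in> {0,2}" using children[of k] assms by (simp add: cnt_def)
  then have "cnt n p k k = 0 \<or> cnt n p k k = 2" by simp
  then show ?thesis
  proof
    assume "cnt n p k k = 0" then show ?thesis using a b by arith
  next
    assume "cnt n p k k = 2" then show ?thesis using a b by arith
  qed
qed

lemma F_mono: "k \<le> 2*n-3 \<Longrightarrow> j \<le> k \<Longrightarrow> Fmat n p k j \<ge> cnt n p k j"
  using col_step by (metis le_add2)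

lemma sum_cnt: "k \<le> 2*n-3 \<Longrightarrow> m \<le> k \<Longrightarrow> (\<Sum>L<Suc m. real (cnt n p k L)) = real (Fmat n p k m)"
proof (induction m)
  case 0 then show ?case using col_step[of k 0] by simp
next
  case (Suc m) then show ?case using col_step[of k "Suc m"] by simp
qed

lemma incr_TF: "Suc k \<le> 2*n-3 \<Longrightarrow> L \<le> k \<Longrightarrow> incr (TF n p k) (Suc k) L = cnt n p k L"
  using col_step[of k L] by (cases "L = 0") (auto simp: incr_def TF_def)

lemma pmf_choose:
  assumes "Suc k \<le> 2*n-3"
  shows "pmf (choose_L (TF n p k) (Suc k)) L = (if L < Suc k then real (cnt n p k L) / real (Fmat n p k k) else 0)"
proof -
  define f where "f = (\<lambda>L. if L < Suc k then real (cnt n p k L) / real (Fmat n p k k) else 0)"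
  have e: "(\<lambda>L. if L < Suc k then real (incr (TF n p k) (Suc k) L) / real (TF n p k (Suc k - 1) (Suc k - 1)) else 0) = f"
  proof (rule ext)
    fix L
    have d: "TF n p k (Suc k - 1) (Suc k - 1) = Fmat n p k k" by (simp add: TF_def)
    show "(if L < Suc k then real (incr (TF n p k) (Suc k) L) / real (TF n p k (Suc k - 1) (Suc k - 1)) else 0) = f L"
    proof (cases "L < Suc k")
      case True
      then have "incr (TF n p k) (Suc k) L = cnt n p k L" using incr_TF[of k L] assms by simp
      then show ?thesis using True d by (simp add: f_def)
    next
      case False then show ?thesis by (simp add: f_def)
    qed
  qed
  have nn: "\<And>x. 0 \<le> f x" by (simp add: f_def)
  have pos: "real (Fmat n p k k) > 0" using F_pos[of k] assms by simp
  have "(\<integral>\<^sup>+x. ennreal (f x) \<partial>count_space UNIV) = (\<Sum>x\<in>{..<Suc k}. ennreal (f x))"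
    by (rule nn_integral_count_space') (auto simp: f_def)
  also have "\<dots> = ennreal (\<Sum>x\<in>{..<Suc k}. f x)" by (rule sum_ennreal) (simp add: nn)
  also have "(\<Sum>x\<in>{..<Suc k}. f x) = (\<Sum>x<Suc k. real (cnt n p k x) / real (Fmat n p k k))"
    by (rule sum.cong) (auto simp: f_def)
  also have "\<dots> = (\<Sum>x<Suc k. real (cnt n p k x)) / real (Fmat n p k k)"
    by (rule sum_divide_distrib[symmetric])
  also have "\<dots> = 1" using sum_cnt[of k k] assms pos by simp
  finally have one: "(\<integral>\<^sup>+x. ennreal (f x) \<partial>count_space UNIV) = 1" by simp
  have "pmf (embed_pmf f) L = f L" by (rule pmf_embed_pmf[OF nn one])
  then show ?thesis unfolding choose_L_def e by (simp only: f_def)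
qed

lemma choose_support:
  assumes "Suc k \<le> 2*n-3" "L \<in> set_pmf (choose_L (TF n p k) (Suc k))"
  shows "L < Suc k \<and> cnt n p k L > 0"
proof -
  have "pmf (choose_L (TF n p k) (Suc k)) L \<noteq> 0" using assms(2) by (simp add: pmf_eq_0_set_pmf)
  then show ?thesis using pmf_choose[OF assms(1), of L] by (auto split: if_splits)
qed

lemma L0_lt: "Suc k \<le> 2*n-3 \<Longrightarrow> p (Suc k) < Suc k"
  by (rule par_lt) auto

lemma new_row_eq:
  assumes k: "Suc k \<le> 2*n-3"
  shows "new_row (TF n p k) (Suc k) (p (Suc k)) dk = TF n p (Suc k) \<longleftrightarrow> dk = Fmat n p (Suc k) (Suc k)"
proof
  assume "new_row (TF n p k) (Suc k) (p (Suc k)) dk = TF n p (Suc k)"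
  then have "new_row (TF n p k) (Suc k) (p (Suc k)) dk (Suc k) (Suc k) = TF n p (Suc k) (Suc k) (Suc k)"
    by simp
  then show "dk = Fmat n p (Suc k) (Suc k)" using L0_lt[OF k] by (simp add: new_row_def TF_def)
next
  assume dk: "dk = Fmat n p (Suc k) (Suc k)"
  have L0: "p (Suc k) < Suc k" using L0_lt[OF k] .
  show "new_row (TF n p k) (Suc k) (p (Suc k)) dk = TF n p (Suc k)"
  proof (intro ext)
    fix i j
    show "new_row (TF n p k) (Suc k) (p (Suc k)) dk i j = TF n p (Suc k) i j"
    proof (cases "i = Suc k")
      case False then show ?thesis by (simp add: new_row_def TF_def le_Suc_eq)
    next
      case True
      consider "j < p (Suc k)" | "p (Suc k) \<le> j \<and> j \<le> k" | "j = Suc k" | "Suc k < j" by linarith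
      then show ?thesis
      proof cases
        case 1 then show ?thesis using True row_step[OF k, of j] L0 by (simp add: new_row_def TF_def)
      next
        case 2 then show ?thesis using True row_step[OF k, of j] L0 by (simp add: new_row_def TF_def)
      next
        case 3 then show ?thesis using True dk L0 by (simp add: new_row_def TF_def)
      next
        case 4 then show ?thesis using True F_zero[of "Suc k" j] L0 by (simp add: new_row_def TF_def)
      qed
    qed
  qed
qed

lemma new_row_ne:
  assumes k: "Suc k \<le> 2*n-3" and L: "L < Suc k" "cnt n p k L > 0" "L \<noteq> p (Suc k)"
  shows "new_row (TF n p k) (Suc k) L dk \<noteq> TF n p (Suc k)"
proof
  assume eq: "new_row (TF n p k) (Suc k) L dk = TF n p (Suc k)"
  have L0: "p (Suc k) < Suc k" using L0_lt[OF k] .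
  show False
  proof (cases "L < p (Suc k)")
    case True
    have "new_row (TF n p k) (Suc k) L dk (Suc k) L = TF n p (Suc k) (Suc k) L" using eq by simp
    then have "Fmat n p k L - 1 = Fmat n p (Suc k) L" using L by (simp add: new_row_def TF_def)
    moreover have "Fmat n p k L = Fmat n p (Suc k) L" using row_step[OF k, of L] True L by simp
    moreover have "Fmat n p k L > 0" using F_mono[of k L] L k by simp
    ultimately show False by simp
  next
    case False
    then have lt: "p (Suc k) < L" using L by simp
    have "new_row (TF n p k) (Suc k) L dk (Suc k) (p (Suc k)) = TF n p (Suc k) (Suc k) (p (Suc k))" using eq by simp
    then have "Fmat n p k (p (Suc k)) = Fmat n p (Suc k) (p (Suc k))" using lt L0 by (simp add: new_row_def TF_def)
    moreover have "Fmat n p k (p (Suc k)) = Fmat n p (Suc k) (p (Suc k)) + 1" using row_step[OF k, of "p (Suc k)"] L0 by simp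
    ultimately show False by simp
  qed
qed

lemma new_row_ne2:
  assumes k: "Suc k \<le> 2*n-3" and sup: "\<And>i j. k < i \<Longrightarrow> M i j = 0" and ne: "M \<noteq> TF n p k"
  shows "new_row M (Suc k) L dk \<noteq> TF n p (Suc k)"
proof
  assume eq: "new_row M (Suc k) L dk = TF n p (Suc k)"
  obtain i j where ij: "M i j \<noteq> TF n p k i j" using ne by (metis ext)
  have ik: "i \<le> k"
  proof (rule ccontr)
    assume "\<not> i \<le> k"
    then have "M i j = 0" "TF n p k i j = 0" using sup[of i j] by (auto simp: TF_def)
    then show False using ij by simp
  qed
  have "new_row M (Suc k) L dk i j = TF n p (Suc k) i j" using eq by simp
  then have "M i j = TF n p k i j" using ik by (simp add: new_row_def TF_def)
  then show False using ij by simp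
qed

lemma build_TF:
  "k \<le> 2*n-3 \<Longrightarrow> pmf (build d k) (TF n p k) =
     (if \<forall>i\<le>k. d!i = Fmat n p i i
      then \<Prod>i\<in>{1..k}. real (cnt n p (i-1) (p i)) / real (Fmat n p (i-1) (i-1)) else 0)"
proof (induction k)
  case 0
  define X :: "nat \<Rightarrow> nat \<Rightarrow> nat" where "X = (\<lambda>i j. if i = 0 \<and> j = 0 then d!0 else 0)"
  have "X = TF n p 0 \<longleftrightarrow> d!0 = Fmat n p 0 0"
  proof
    assume "X = TF n p 0" then have "X 0 0 = TF n p 0 0 0" by simp
    then show "d!0 = Fmat n p 0 0" by (simp add: X_def TF_def)
  next
    assume a: "d!0 = Fmat n p 0 0"
    show "X = TF n p 0"
    proof (intro ext)
      fix i j show "X i j = TF n p 0 i j"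
        using a F_zero[of 0 j] by (auto simp: X_def TF_def)
    qed
  qed
  then show ?case by (simp add: X_def[symmetric] indicator_def)
next
  case (Suc k)
  have k: "Suc k \<le> 2*n-3" using Suc.prems .
  define dk where "dk = d!Suc k"
  define L0 where "L0 = p (Suc k)"
  have bd: "build d (Suc k) = bind_pmf (build d k) (\<lambda>M. bind_pmf (choose_L M (Suc k)) (\<lambda>L. return_pmf (new_row M (Suc k) L dk)))"
    by (simp add: dk_def)
  have step1: "pmf (build d (Suc k)) (TF n p (Suc k)) = pmf (build d k) (TF n p k) *
      pmf (bind_pmf (choose_L (TF n p k) (Suc k)) (\<lambda>L. return_pmf (new_row (TF n p k) (Suc k) L dk))) (TF n p (Suc k))"
    unfolding bd
  proof (rule pmf_bind_single)
    fix M assume M: "M \<in> set_pmf (build d k)" "M \<noteq> TF n p k"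
    have "\<And>L. new_row M (Suc k) L dk \<noteq> TF n p (Suc k)"
      using new_row_ne2[OF k _ M(2)] build_support[OF M(1)] by blast
    then show "pmf (bind_pmf (choose_L M (Suc k)) (\<lambda>L. return_pmf (new_row M (Suc k) L dk))) (TF n p (Suc k)) = 0"
      by (simp add: pmf_eq_0_set_pmf) (metis)
  qed
  have step2: "pmf (bind_pmf (choose_L (TF n p k) (Suc k)) (\<lambda>L. return_pmf (new_row (TF n p k) (Suc k) L dk))) (TF n p (Suc k))
     = pmf (choose_L (TF n p k) (Suc k)) L0 * pmf (return_pmf (new_row (TF n p k) (Suc k) L0 dk)) (TF n p (Suc k))"
  proof (rule pmf_bind_single)
    fix L assume L: "L \<in> set_pmf (choose_L (TF n p k) (Suc k))" "L \<noteq> L0"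
    have "new_row (TF n p k) (Suc k) L dk \<noteq> TF n p (Suc k)"
      using new_row_ne[OF k] choose_support[OF k L(1)] L(2) by (simp add: L0_def)
    then show "pmf (return_pmf (new_row (TF n p k) (Suc k) L dk)) (TF n p (Suc k)) = 0" by simp
  qed
  have step3: "pmf (return_pmf (new_row (TF n p k) (Suc k) L0 dk)) (TF n p (Suc k)) = (if dk = Fmat n p (Suc k) (Suc k) then 1 else 0)"
    using new_row_eq[OF k, of dk] by (simp add: L0_def indicator_def)
  have step4: "pmf (choose_L (TF n p k) (Suc k)) L0 = real (cnt n p k L0) / real (Fmat n p k k)"
    using pmf_choose[OF k, of L0] L0_lt[OF k] by (simp add: L0_def)
  have IH: "pmf (build d k) (TF n p k) = (if \<forall>i\<le>k. d!i = Fmat n p i i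
      then \<Prod>i\<in>{1..k}. real (cnt n p (i-1) (p i)) / real (Fmat n p (i-1) (i-1)) else 0)"
    using Suc.IH k by simp
  have pr: "(\<Prod>i\<in>{1..Suc k}. real (cnt n p (i-1) (p i)) / real (Fmat n p (i-1) (i-1))) =
     (\<Prod>i\<in>{1..k}. real (cnt n p (i-1) (p i)) / real (Fmat n p (i-1) (i-1))) * (real (cnt n p k L0) / real (Fmat n p k k))"
    by (simp add: L0_def)
  have cond: "(\<forall>i\<le>Suc k. d!i = Fmat n p i i) \<longleftrightarrow> (\<forall>i\<le>k. d!i = Fmat n p i i) \<and> dk = Fmat n p (Suc k) (Suc k)"
    by (auto simp: dk_def le_Suc_eq)
  show ?case unfolding step1 step2 step3 step4 IH pr cond
    by (cases "\<forall>i\<le>k. d!i = Fmat n p i i"; cases "dk = Fmat n p (Suc k) (Suc k)") (simp_all, blast)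
qed

lemma prod_cnt_N: "(\<Prod>i\<in>{1..2*n-2}. cnt n p (i-1) (p i)) = 2^(n-1)"
proof -
  define N where "N = 2*n-2"
  define S where "S v = {m\<in>{1..N}. p m = v}" for v
  define c where "c i = cnt n p (i-1) (p i)" for i
  have img: "p ` {1..N} \<subseteq> {0..N}" using par_lt unfolding N_def by fastforce
  have grp: "(\<Prod>v\<in>{0..N}. \<Prod>i\<in>S v. c i) = (\<Prod>i\<in>{1..N}. c i)"
    unfolding S_def by (rule prod.group[OF _ _ img]) auto
  have cS: "c i = card {m\<in>S v. i \<le> m}" if "i \<in> S v" for i v
  proof -
    have "{m\<in>{1..2*n-2}. p m = p i \<and> i - 1 < m} = {m\<in>S v. i \<le> m}"
      using that unfolding S_def N_def by auto
    then show ?thesis by (simp add: c_def cnt_def)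
  qed
  have inner: "(\<Prod>i\<in>S v. c i) = 2^(card (S v) div 2)" if v: "v \<in> {0..N}" for v
  proof -
    have "card (S v) \<in> {0,2}" using children[of v] v unfolding S_def N_def by auto
    moreover have fin: "finite (S v)" unfolding S_def by auto
    moreover
    { assume "card (S v) = 2"
      then obtain a b where ab: "S v = {a,b}" "a \<noteq> b" by (meson card_2_iff)
      have "(\<Prod>i\<in>S v. c i) = 2"
      proof (cases "a < b")
        case True
        have "{m\<in>S v. a \<le> m} = {a,b}" using ab True by auto
        then have "c a = 2" using cS[of a v] ab by simp
        moreover have "{m\<in>S v. b \<le> m} = {b}" using ab True by auto
        then have "c b = 1" using cS[of b v] ab by simp
        ultimately show ?thesis using ab by simp
      next
        case False
        then have ba: "b < a" using ab by simp
        have "{m\<in>S v. b \<le> m} = {a,b}" using ab ba by auto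
        then have "c b = 2" using cS[of b v] ab by simp
        moreover have "{m\<in>S v. a \<le> m} = {a}" using ab ba by auto
        then have "c a = 1" using cS[of a v] ab by simp
        ultimately show ?thesis using ab by simp
      qed
      then have "(\<Prod>i\<in>S v. c i) = 2^(card (S v) div 2)" using \<open>card (S v) = 2\<close> by simp }
    ultimately show ?thesis by auto
  qed
  have sumc: "(\<Sum>v\<in>{0..N}. card (S v)) = N"
  proof -
    have "(\<Sum>v\<in>{0..N}. \<Sum>i\<in>S v. (1::nat)) = (\<Sum>i\<in>{1..N}. (1::nat))"
      unfolding S_def by (rule sum.group[OF _ _ img]) auto
    then show ?thesis by simp
  qed
  have ev: "card (S v) = 2 * (card (S v) div 2)" if "v \<in> {0..N}" for v
  proof -
    have "card (S v) \<in> {0,2}" using children[of v] that unfolding S_def N_def by auto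
    then show ?thesis by auto
  qed
  have "(\<Sum>v\<in>{0..N}. card (S v)) = (\<Sum>v\<in>{0..N}. 2 * (card (S v) div 2))"
    by (rule sum.cong[OF refl]) (rule ev)
  also have "\<dots> = 2 * (\<Sum>v\<in>{0..N}. card (S v) div 2)"
    by (rule sum_distrib_left[symmetric])
  finally have "(\<Sum>v\<in>{0..N}. card (S v)) = 2 * (\<Sum>v\<in>{0..N}. card (S v) div 2)" .
  then have hs: "(\<Sum>v\<in>{0..N}. card (S v) div 2) = n - 1" using sumc n2 unfolding N_def by linarith
  have "(\<Prod>i\<in>{1..N}. c i) = (\<Prod>v\<in>{0..N}. 2^(card (S v) div 2))"
    using grp inner by (metis (no_types, lifting) prod.cong)
  also have "\<dots> = 2^(\<Sum>v\<in>{0..N}. card (S v) div 2)" by (simp add: power_sum)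
  finally show ?thesis using hs unfolding N_def c_def by simp
qed

lemma prod_cnt_K: "(\<Prod>i\<in>{1..2*n-3}. cnt n p (i-1) (p i)) = 2^(n-1)"
proof -
  have "p (2*n-2) < 2*n-2" using par_lt n2 by simp
  then have "{m\<in>{1..2*n-2}. p m = p (2*n-2) \<and> 2*n-2-1 < m} = {2*n-2}" using n2 by auto
  then have "cnt n p (2*n-2-1) (p (2*n-2)) = 1" by (simp add: cnt_def)
  then show ?thesis using prod_cnt_N unfolding KN by simp
qed

lemma TF_K: "TF n p (2*n-3) = Fmat n p"
  by (intro ext) (auto simp: TF_def F_zero)

theorem main:
  "pmf (diag_topdown n) (Fmat n p) =
    (1 / catalan (n-1)) * (2 ^ (n-1) / (\<Prod>j=1..2*n-2. real (Fmat n p (j-1) (j-1))))"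
proof -
  define K where "K = 2*n-3"
  define V where "V = valid_diags n"
  define d0 where "d0 = map (\<lambda>k. Fmat n p k k) [0..<2*n-2]"
  have finV: "finite V" unfolding V_def valid_TT[OF n2] by (rule TT_finite)
  have d0i: "d0!i = Fmat n p i i" if "i \<le> K" for i
  proof -
    have "i < 2*n-2" using that n2 unfolding K_def by simp
    then show ?thesis unfolding d0_def by simp
  qed
  have d0V: "d0 \<in> V"
    unfolding V_def valid_diags_def mem_Collect_eq
  proof (intro conjI allI impI)
    show "length d0 = 2*n-2" by (simp add: d0_def)
    show "d0!0 = 2" using d0i[of 0] F00 by simp
    show "d0!(2*n-3) = 1" using d0i[of "2*n-3"] FKK by (simp add: K_def)
    fix k
    { assume "k < 2*n-2" then show "0 < d0!k" using d0i[of k] F_pos[of k] unfolding K_def by simp }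
    { assume k: "1 \<le> k \<and> k < 2*n-2"
      then have "k \<le> K" "k - 1 \<le> K" using n2 unfolding K_def by auto
      then show "d0!k = d0!(k-1) + 1 \<or> d0!(k-1) = d0!k + 1"
        using d0i[of k] d0i[of "k-1"] diag_step[of k] k unfolding K_def by simp }
  qed
  have Vne: "V \<noteq> {}" using d0V by auto
  have dt: "diag_topdown n = bind_pmf (pmf_of_set V) (\<lambda>d. build d K)"
    by (simp add: diag_topdown_def V_def K_def)
  have "pmf (diag_topdown n) (Fmat n p) = pmf (pmf_of_set V) d0 * pmf (build d0 K) (Fmat n p)"
    unfolding dt
  proof (rule pmf_bind_single)
    fix d assume d: "d \<in> set_pmf (pmf_of_set V)" "d \<noteq> d0"
    then have dV: "d \<in> V" using finV Vne by simp
    have "\<not> (\<forall>i\<le>K. d!i = Fmat n p i i)"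
    proof
      assume h: "\<forall>i\<le>K. d!i = Fmat n p i i"
      have "d = d0"
      proof (rule nth_equalityI)
        show "length d = length d0" using dV by (simp add: V_def valid_diags_def d0_def)
        fix i assume "i < length d"
        then have "i \<le> K" using dV n2 by (simp add: V_def valid_diags_def K_def)
        then show "d!i = d0!i" using h d0i by simp
      qed
      then show False using d by simp
    qed
    note neg = this
    have bt: "pmf (build d K) (TF n p K) = (if \<forall>i\<le>K. d!i = Fmat n p i i
      then \<Prod>i\<in>{1..K}. real (cnt n p (i-1) (p i)) / real (Fmat n p (i-1) (i-1)) else 0)"
      by (rule build_TF) (simp add: K_def)
    have "pmf (build d K) (TF n p K) = 0" unfolding bt using neg by (rule if_not_P)
    then show "pmf (build d K) (Fmat n p) = 0" using TF_K unfolding K_def by simp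
  qed
  also have "pmf (pmf_of_set V) d0 = 1 / real (card V)" using d0V finV Vne by simp
  also have "pmf (build d0 K) (Fmat n p) = (\<Prod>i\<in>{1..K}. real (cnt n p (i-1) (p i)) / real (Fmat n p (i-1) (i-1)))"
  proof -
    have bt: "pmf (build d0 K) (TF n p K) = (if \<forall>i\<le>K. d0!i = Fmat n p i i
      then \<Prod>i\<in>{1..K}. real (cnt n p (i-1) (p i)) / real (Fmat n p (i-1) (i-1)) else 0)"
      by (rule build_TF) (simp add: K_def)
    have "\<forall>i\<le>K. d0!i = Fmat n p i i" using d0i by simp
    then have "pmf (build d0 K) (TF n p K) = (\<Prod>i\<in>{1..K}. real (cnt n p (i-1) (p i)) / real (Fmat n p (i-1) (i-1)))"
      unfolding bt by (rule if_P)
    then show ?thesis using TF_K unfolding K_def by simp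
  qed
  also have "\<dots> = (\<Prod>i\<in>{1..K}. real (cnt n p (i-1) (p i))) / (\<Prod>i\<in>{1..K}. real (Fmat n p (i-1) (i-1)))"
    by (rule prod_dividef)
  also have "(\<Prod>i\<in>{1..K}. real (cnt n p (i-1) (p i))) = 2^(n-1)"
    using prod_cnt_K unfolding K_def by (metis of_nat_numeral of_nat_power of_nat_prod)
  also have "(\<Prod>i\<in>{1..K}. real (Fmat n p (i-1) (i-1))) = (\<Prod>j=1..2*n-2. real (Fmat n p (j-1) (j-1)))"
    unfolding KN using FKK by (simp add: K_def)
  also have "real (card V) = catalan (n-1)" unfolding V_def by (rule card_valid[OF n2])
  finally show ?thesis by simp
qed

end


theorem proposition5:
  fixes n :: nat and p :: "nat \<Rightarrow> nat"
  assumes "n \<ge> 2" and "fh_ranked_tree n p"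
  shows "pmf (diag_topdown n) (Fmat n p) =
    (1 / catalan (n-1)) * (2 ^ (n-1) / (\<Prod>j=1..2*n-2. real (Fmat n p (j-1) (j-1))))"
  by (rule main[OF assms])

end
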